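(* Assume that every intermediary $i\in\mathcal V$ satisfies $\sum_{j\in\delta_{\mathrm{in}}(i)}w_{ij}r_j\ge r_i$. Then for all $t\in\mathbb N$, $$\mathbf m^t\le\mathbf m^{t+1}\quad\text{and}\quad \mathbb E[\mathcal L(\mathbf X^t)]\le\mathbb E[\mathcal L(\mathbf X^{t+1})],$$ and consequently $\mathbf m\ge\mathbf r$ and $\mathbb E[\mathcal L(\mathbf X^\infty)]\ge\mathbb E[\mathcal L(\mathbf X^0)]$. Moreover, for every intermediary $i$, if $\alpha_i$ is regarded as a variable in $(0,1)$ with all other parameters fixed, then $\mathbf m$ is differentiable in $\alpha_i$ and $$\frac{\partial\mathbf m}{\partial\alpha_i}=(\mathbf I-\mathbf A\mathbf W)^{-1}\,\mathbf e_i\mathbf e_i^\top\,\big[\mathbf W\mathbf m-\mathbf r\big]\ \ge\ \mathbf 0,$$ where $\mathbf e_i$ is the $i$-th standard basis vector (so $\mathbf e_i\mathbf e_i^\top=\partial\mathbf A/\partial\alpha_i$).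
   Context: A contractor network is a finite directed graph $G=(\mathcal V,\mathcal E)$ with $n=|\mathcal V|$ nodes, without multiple edges (self-loops and directed cycles allowed), in which every node has at least one incident edge. For $i\in\mathcal V$ let $\delta_{\mathrm{in}}(i)=\{j:(j,i)\in\mathcal E\}$ and $\delta_{\mathrm{out}}(i)=\{k:(i,k)\in\mathcal E\}$. A node $i$ is a pure principal if $\delta_{\mathrm{in}}(i)=\emptyset$, a pure obligee if $\delta_{\mathrm{out}}(i)=\emptyset$, and an intermediary otherwise. Each edge $(j,i)\in\mathcal E$ carries a weight $w_{ij}>0$; $w_{ij}=0$ if $(j,i)\notin\mathcal E$; for every $i$ with $\delta_{\mathrm{in}}(i)\neq\emptyset$, $\sum_{j\in\delta_{\mathrm{in}}(i)}w_{ij}=1$; $\mathbf W=(w_{ij})$. Risk scores: $r_i\in(0,1)$ if $i$ is not a pure obligee and $r_i=0$ for pure obligees; $\mathbf r=(r_i)$. Propagation parameters: $\alpha_i=0$ for pure principals, $\alpha_i=1$ for pure obligees, $\alpha_i\in(0,1)$ for intermediaries; $\mathbf A=\mathrm{diag}(\alpha_i)$. Failure process $(\mathbf X^t)_{t\in\mathbb N}$ on $\{0,1\}^n$: the $X_i^0$ are independent $\mathrm{Bernoulli}(r_i)$; for $t\ge0$, conditionally on $(\mathbf X^0,\dots,\mathbf X^t)$ the $X_i^{t+1}$ are independent with $X_i^{t+1}\sim\mathrm{Bernoulli}\big((1-\alpha_i)r_i+\alpha_i\sum_{j\in\delta_{\mathrm{in}}(i)}w_{ij}X_j^t\big)$.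 $m_i^t=\mathbb E[X_i^t]$, $\mathbf m^t=(m_i^t)$, and $\mathbf m=\lim_t\mathbf m^t$, which exists and equals $(\mathbf I-\mathbf A\mathbf W)^{-1}(\mathbf I-\mathbf A)\mathbf r$ (with $\mathbf I-\mathbf A\mathbf W$ invertible). Losses: $\beta_i\ge0$ for each node, with $\beta_i=0$ for pure obligees; $\mathcal L(\mathbf x)=\sum_i\beta_ix_i=\beta^\top\mathbf x$, and $\mathbb E[\mathcal L(\mathbf X^\infty)]:=\lim_{t\to\infty}\mathbb E[\mathcal L(\mathbf X^t)]=\beta^\top\mathbf m$. Vector inequalities are entrywise. *)

theory Defs
  imports "HOL-Analysis.Analysis" "HOL-Probability.Probability"
begin

text \<open>Nodes are the elements of a finite type 'n.  An edge (j,i) in E is directed j -> i.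
  Weights: w i j is the weight of edge (j,i).\<close>

definition delta_in :: "('n \<times> 'n) set \<Rightarrow> 'n \<Rightarrow> 'n set" where
  "delta_in E i = {j. (j, i) \<in> E}"

definition delta_out :: "('n \<times> 'n) set \<Rightarrow> 'n \<Rightarrow> 'n set" where
  "delta_out E i = {k. (i, k) \<in> E}"

definition pure_principal :: "('n \<times> 'n) set \<Rightarrow> 'n \<Rightarrow> bool" where
  "pure_principal E i \<longleftrightarrow> delta_in E i = {}"

definition pure_obligee :: "('n \<times> 'n) set \<Rightarrow> 'n \<Rightarrow> bool" where
  "pure_obligee E i \<longleftrightarrow> delta_out E i = {}"

definition intermediary :: "('n \<times> 'n) set \<Rightarrow> 'n \<Rightarrow> bool" where
  "intermediary E i \<longleftrightarrow> \<not> pure_principal E i \<and> \<not> pure_obligee E i"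

text \<open>X^0 has independent
  Bernoulli(r_i) coordinates; given the history, X^{t+1} has independent Bernoulli coordinates with
  parameters depending only on X^t, so the law of X^{t+1} is the law of X^t pushed through this
  Markov kernel.\<close>

primrec failure_law ::
  "('n::finite \<times> 'n) set \<Rightarrow> ('n \<Rightarrow> 'n \<Rightarrow> real) \<Rightarrow> ('n \<Rightarrow> real) \<Rightarrow> ('n \<Rightarrow> real) \<Rightarrow> nat
     \<Rightarrow> ('n \<Rightarrow> bool) pmf" where
  "failure_law E w r \<alpha> 0 = Pi_pmf UNIV False (\<lambda>i. bernoulli_pmf (r i))"
| "failure_law E w r \<alpha> (Suc t) =
     bind_pmf (failure_law E w r \<alpha> t)
       (\<lambda>x. Pi_pmf UNIV False (\<lambda>i. bernoulli_pmf
              ((1 - \<alpha> i) * r i + \<alpha> i * (\<Sum>j\<in>delta_in E i. w i j * of_bool (x j)))))"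

definition mean_vec ::
  "('n::finite \<times> 'n) set \<Rightarrow> ('n \<Rightarrow> 'n \<Rightarrow> real) \<Rightarrow> ('n \<Rightarrow> real) \<Rightarrow> ('n \<Rightarrow> real) \<Rightarrow> nat \<Rightarrow> real ^ 'n" where
  "mean_vec E w r \<alpha> t = (\<chi> i. measure_pmf.expectation (failure_law E w r \<alpha> t) (\<lambda>x. of_bool (x i)))"

definition mean_lim ::
  "('n::finite \<times> 'n) set \<Rightarrow> ('n \<Rightarrow> 'n \<Rightarrow> real) \<Rightarrow> ('n \<Rightarrow> real) \<Rightarrow> ('n \<Rightarrow> real) \<Rightarrow> real ^ 'n" where
  "mean_lim E w r \<alpha> = lim (\<lambda>t. mean_vec E w r \<alpha> t)"

definition expected_loss ::
  "('n::finite \<times> 'n) set \<Rightarrow> ('n \<Rightarrow> 'n \<Rightarrow> real) \<Rightarrow> ('n \<Rightarrow> real) \<Rightarrow> ('n \<Rightarrow> real) \<Rightarrow> ('n \<Rightarrow> real)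
     \<Rightarrow> nat \<Rightarrow> real" where
  "expected_loss E w r \<alpha> \<beta> t =
     measure_pmf.expectation (failure_law E w r \<alpha> t) (\<lambda>x. \<Sum>i\<in>UNIV. \<beta> i * of_bool (x i))"

definition expected_loss_lim ::
  "('n::finite \<times> 'n) set \<Rightarrow> ('n \<Rightarrow> 'n \<Rightarrow> real) \<Rightarrow> ('n \<Rightarrow> real) \<Rightarrow> ('n \<Rightarrow> real) \<Rightarrow> ('n \<Rightarrow> real) \<Rightarrow> real" where
  "expected_loss_lim E w r \<alpha> \<beta> = lim (\<lambda>t. expected_loss E w r \<alpha> \<beta> t)"

definition vec_of :: "('n::finite \<Rightarrow> real) \<Rightarrow> real ^ 'n" where
  "vec_of f = (\<chi> i. f i)"

definition W_mat :: "('n::finite \<Rightarrow> 'n \<Rightarrow> real) \<Rightarrow> real ^ 'n ^ 'n" where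
  "W_mat w = (\<chi> i j. w i j)"

definition diag_mat :: "('n::finite \<Rightarrow> real) \<Rightarrow> real ^ 'n ^ 'n" where
  "diag_mat a = (\<chi> i j. if i = j then a i else 0)"

definition unit_proj :: "'n::finite \<Rightarrow> real ^ 'n ^ 'n" where
  "unit_proj k = (\<chi> i j. if i = k \<and> j = k then 1 else 0)"

end

theory Submission
  imports Defs
begin

locale net =
  fixes E :: "('n::finite \<times> 'n) set"
    and w :: "'n \<Rightarrow> 'n \<Rightarrow> real"
    and r \<alpha> :: "'n \<Rightarrow> real"
  assumes incident: "\<forall>i. delta_in E i \<noteq> {} \<or> delta_out E i \<noteq> {}"
    and w_pos: "\<forall>i j. (j, i) \<in> E \<longrightarrow> w i j > 0"
    and w_zero: "\<forall>i j. (j, i) \<notin> E \<longrightarrow> w i j = 0"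
    and w_sum: "\<forall>i. delta_in E i \<noteq> {} \<longrightarrow> (\<Sum>j\<in>delta_in E i. w i j) = 1"
    and r_nonobl: "\<forall>i. \<not> pure_obligee E i \<longrightarrow> 0 < r i \<and> r i < 1"
    and r_obl: "\<forall>i. pure_obligee E i \<longrightarrow> r i = 0"
    and \<alpha>_princ: "\<forall>i. pure_principal E i \<longrightarrow> \<alpha> i = 0"
    and \<alpha>_obl: "\<forall>i. pure_obligee E i \<longrightarrow> \<alpha> i = 1"
    and \<alpha>_int: "\<forall>i. intermediary E i \<longrightarrow> 0 < \<alpha> i \<and> \<alpha> i < 1"
    and hyp: "\<forall>i. intermediary E i \<longrightarrow> (\<Sum>j\<in>delta_in E i. w i j * r j) \<ge> r i"
begin

lemma w_nonneg: "0 \<le> w i j"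
  using w_pos w_zero by (metis less_le_not_le order_refl linorder_not_le)

lemma sum_delta: "(\<Sum>j\<in>delta_in E i. w i j * f j) = (\<Sum>j\<in>UNIV. w i j * f j)"
  by (rule sum.mono_neutral_left) (auto simp: delta_in_def w_zero)

lemma wsum_le: "(\<Sum>j\<in>UNIV. w i j) \<le> 1"
proof -
  have "(\<Sum>j\<in>UNIV. w i j) = (\<Sum>j\<in>delta_in E i. w i j * 1)" using sum_delta[of i "\<lambda>_. 1"] by simp
  then show ?thesis using w_sum by (cases "delta_in E i = {}") auto
qed

lemma wsum_le_bound:
  assumes "\<And>j. f j \<le> c" "0 \<le> c"
  shows "(\<Sum>j\<in>UNIV. w i j * f j) \<le> c"
proof -
  have "(\<Sum>j\<in>UNIV. w i j * f j) \<le> (\<Sum>j\<in>UNIV. w i j * c)"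
    by (rule sum_mono) (simp add: assms mult_left_mono w_nonneg)
  also have "\<dots> = (\<Sum>j\<in>UNIV. w i j) * c" by (simp add: sum_distrib_right)
  also have "\<dots> \<le> c" using wsum_le[of i] assms(2) by (simp add: mult_left_le_one_le sum_nonneg w_nonneg)
  finally show ?thesis .
qed

lemma wsum_nonneg:
  assumes "\<And>j. 0 \<le> f j"
  shows "0 \<le> (\<Sum>j\<in>UNIV. w i j * f j)"
  by (simp add: assms sum_nonneg w_nonneg)

lemma alpha_01: "0 \<le> \<alpha> i \<and> \<alpha> i \<le> 1"
  using \<alpha>_princ \<alpha>_obl \<alpha>_int unfolding intermediary_def by (metis less_eq_real_def order_refl zero_le_one)

lemma r_01: "0 \<le> r i \<and> r i \<le> 1"
  using r_nonobl r_obl by (metis less_eq_real_def order_refl zero_le_one)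

lemma alpha_lt1: "\<not> pure_obligee E i \<Longrightarrow> \<alpha> i < 1"
  using \<alpha>_princ \<alpha>_int unfolding intermediary_def by fastforce

lemma w_nonobl: "w i j \<noteq> 0 \<Longrightarrow> \<not> pure_obligee E j"
  using w_zero unfolding pure_obligee_def delta_out_def by blast

definition par :: "('n \<Rightarrow> bool) \<Rightarrow> 'n \<Rightarrow> real" where
  "par x i = (1 - \<alpha> i) * r i + \<alpha> i * (\<Sum>j\<in>delta_in E i. w i j * of_bool (x j))"

lemma par_01: "0 \<le> par x i \<and> par x i \<le> 1"
proof -
  define s where "s = (\<Sum>j\<in>UNIV. w i j * of_bool (x j))"
  have s1: "0 \<le> s" unfolding s_def by (rule wsum_nonneg) simp
  have s2: "s \<le> 1" unfolding s_def by (rule wsum_le_bound) auto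
  note s = s1 s2
  have "par x i = (1 - \<alpha> i) * r i + \<alpha> i * s" unfolding par_def s_def sum_delta ..
  moreover have "0 \<le> (1 - \<alpha> i) * r i + \<alpha> i * s" using alpha_01[of i] r_01[of i] s by simp
  moreover have "(1 - \<alpha> i) * r i + \<alpha> i * s \<le> (1 - \<alpha> i) * 1 + \<alpha> i * 1"
    using alpha_01[of i] r_01[of i] s by (intro add_mono mult_left_mono) auto
  ultimately show ?thesis by simp
qed

lemma exp_Pi_bern:
  assumes "\<And>k. 0 \<le> q k \<and> q k \<le> 1"
  shows "measure_pmf.expectation (Pi_pmf (UNIV::'n set) False (\<lambda>k. bernoulli_pmf (q k))) (\<lambda>x. of_bool (x i)) = q i"
proof -
  have "measure_pmf.expectation (Pi_pmf (UNIV::'n set) False (\<lambda>k. bernoulli_pmf (q k))) (\<lambda>x. of_bool (x i))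
     = measure_pmf.expectation (map_pmf (\<lambda>f. f i) (Pi_pmf (UNIV::'n set) False (\<lambda>k. bernoulli_pmf (q k)))) (\<lambda>b. of_bool b :: real)"
    by (subst integral_map_pmf) (rule refl)
  also have "\<dots> = measure_pmf.expectation (bernoulli_pmf (q i)) (\<lambda>b. of_bool b :: real)"
    by (subst Pi_pmf_component) auto
  also have "\<dots> = q i" using assms[of i] by simp
  finally show ?thesis .
qed

abbreviation "M t i \<equiv> mean_vec E w r \<alpha> t $ i"

lemma M0: "M 0 i = r i"
  unfolding mean_vec_def using exp_Pi_bern[of r i] r_01 by simp

lemma exp_finite: "measure_pmf.expectation (p :: ('n \<Rightarrow> bool) pmf) f = (\<Sum>a\<in>UNIV. pmf p a * f a)"
  by (subst integral_measure_pmf[of UNIV]) auto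

lemma MSuc: "M (Suc t) i = (1 - \<alpha> i) * r i + \<alpha> i * (\<Sum>j\<in>UNIV. w i j * M t j)"
proof -
  let ?p = "failure_law E w r \<alpha> t"
  have "M (Suc t) i = (\<Sum>a\<in>UNIV. pmf ?p a *\<^sub>R measure_pmf.expectation (Pi_pmf UNIV False (\<lambda>k. bernoulli_pmf (par a k))) (\<lambda>x. of_bool (x i)))"
    unfolding mean_vec_def failure_law.simps par_def[symmetric] vec_lambda_beta
    by (rule pmf_expectation_bind[of UNIV]) auto
  also have "\<dots> = (\<Sum>a\<in>UNIV. pmf ?p a * par a i)"
    by (simp add: exp_Pi_bern par_01)
  also have "\<dots> = (\<Sum>a\<in>UNIV. pmf ?p a * ((1 - \<alpha> i) * r i) + \<alpha> i * (\<Sum>j\<in>UNIV. w i j * (pmf ?p a * of_bool (a j))))"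
    unfolding par_def sum_delta by (simp add: algebra_simps sum_distrib_left)
  also have "\<dots> = (1 - \<alpha> i) * r i + \<alpha> i * (\<Sum>j\<in>UNIV. w i j * (\<Sum>a\<in>UNIV. pmf ?p a * of_bool (a j)))"
    by (simp add: sum.distrib sum_distrib_left[symmetric] sum_distrib_right[symmetric] sum_pmf_eq_1 sum.swap[of _ UNIV UNIV])
  also have "\<dots> = (1 - \<alpha> i) * r i + \<alpha> i * (\<Sum>j\<in>UNIV. w i j * M t j)"
    unfolding mean_vec_def vec_lambda_beta exp_finite ..
  finally show ?thesis .
qed

lemma comb_01:
  assumes "\<And>j. 0 \<le> f j \<and> f j \<le> 1"
  shows "0 \<le> (1 - \<alpha> i) * r i + \<alpha> i * (\<Sum>j\<in>UNIV. w i j * f j)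
       \<and> (1 - \<alpha> i) * r i + \<alpha> i * (\<Sum>j\<in>UNIV. w i j * f j) \<le> 1"
proof -
  define s where "s = (\<Sum>j\<in>UNIV. w i j * f j)"
  have s1: "0 \<le> s" unfolding s_def by (rule wsum_nonneg) (use assms in auto)
  have s2: "s \<le> 1" unfolding s_def by (rule wsum_le_bound) (use assms in auto)
  have "0 \<le> (1 - \<alpha> i) * r i + \<alpha> i * s" using alpha_01[of i] r_01[of i] s1 by simp
  moreover have "(1 - \<alpha> i) * r i + \<alpha> i * s \<le> (1 - \<alpha> i) * 1 + \<alpha> i * 1"
    using alpha_01[of i] r_01[of i] s1 s2 by (intro add_mono mult_left_mono) auto
  ultimately show ?thesis unfolding s_def by simp
qed

lemma M_01: "0 \<le> M t i \<and> M t i \<le> 1"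
proof (induction t arbitrary: i)
  case 0 then show ?case using M0 r_01 by simp
next
  case (Suc t) then show ?case unfolding MSuc by (rule comb_01)
qed

lemma M_mono: "M t i \<le> M (Suc t) i"
proof (induction t arbitrary: i)
  case 0
  show ?case
  proof (cases "pure_principal E i")
    case True
    then show ?thesis using \<alpha>_princ M0 MSuc by simp
  next
    case np: False
    show ?thesis
    proof (cases "pure_obligee E i")
      case True
      then show ?thesis using \<alpha>_obl r_obl M0 MSuc wsum_nonneg[of r i] r_01 by simp
    next
      case False
      then have int: "intermediary E i" using np unfolding intermediary_def by simp
      have "r i \<le> (\<Sum>j\<in>UNIV. w i j * r j)" using hyp int sum_delta[of i r] by metis
      then have "r i \<le> (1 - \<alpha> i) * r i + \<alpha> i * (\<Sum>j\<in>UNIV. w i j * r j)"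
      proof -
        have "0 \<le> \<alpha> i * ((\<Sum>j\<in>UNIV. w i j * r j) - r i)" using alpha_01[of i] \<open>r i \<le> _\<close> by simp
        then show ?thesis by (simp add: algebra_simps)
      qed
      then show ?thesis using M0 MSuc by simp
    qed
  qed
next
  case (Suc t)
  have "(\<Sum>j\<in>UNIV. w i j * M t j) \<le> (\<Sum>j\<in>UNIV. w i j * M (Suc t) j)"
    by (rule sum_mono) (simp add: Suc mult_left_mono w_nonneg)
  then have "\<alpha> i * (\<Sum>j\<in>UNIV. w i j * M t j) \<le> \<alpha> i * (\<Sum>j\<in>UNIV. w i j * M (Suc t) j)"
    using alpha_01[of i] by (simp add: mult_left_mono)
  then show ?case by (simp only: MSuc[of "Suc t"] MSuc[of t])
qed

lemma M_incseq: "incseq (\<lambda>t. M t i)"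
  using M_mono by (simp add: incseq_SucI)

lemma M_conv: "\<exists>L. (\<lambda>t. M t i) \<longlonglongrightarrow> L"
  using incseq_convergent[OF M_incseq, where B=1] M_01 by (metis (no_types))

definition Lc :: "'n \<Rightarrow> real" where "Lc i = lim (\<lambda>t. M t i)"

lemma M_Lc: "(\<lambda>t. M t i) \<longlonglongrightarrow> Lc i"
  unfolding Lc_def using M_conv[of i] convergent_LIMSEQ_iff convergent_def by blast

lemma mean_vec_lim: "mean_vec E w r \<alpha> \<longlonglongrightarrow> (\<chi> i. Lc i)"
  by (rule vec_tendstoI) (simp add: M_Lc)

lemma mean_lim_eq: "mean_lim E w r \<alpha> = (\<chi> i. Lc i)"
  unfolding mean_lim_def using mean_vec_lim limI by blast

lemma Lc_ge: "M t i \<le> Lc i"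
  using incseq_le[OF M_incseq M_Lc] .

lemma Lc_01: "0 \<le> Lc i \<and> Lc i \<le> 1"
proof -
  have "Lc i \<le> 1" by (rule LIMSEQ_le_const2[OF M_Lc]) (use M_01 in auto)
  then show ?thesis using Lc_ge[of 0 i] M_01[of 0 i] by simp
qed

lemma Lc_fix: "Lc i = (1 - \<alpha> i) * r i + \<alpha> i * (\<Sum>j\<in>UNIV. w i j * Lc j)"
proof -
  have "(\<lambda>t. M (Suc t) i) \<longlonglongrightarrow> Lc i" using M_Lc LIMSEQ_Suc by blast
  moreover have "(\<lambda>t. M (Suc t) i) \<longlonglongrightarrow> (1 - \<alpha> i) * r i + \<alpha> i * (\<Sum>j\<in>UNIV. w i j * Lc j)"
    unfolding MSuc by (intro tendsto_intros M_Lc)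
  ultimately show ?thesis using LIMSEQ_unique by blast
qed

lemma vanish:
  assumes nn: "\<And>i. 0 \<le> v i" and le: "\<And>i. v i \<le> \<alpha> i * (\<Sum>j\<in>UNIV. w i j * v j)"
  shows "v i = 0"
proof -
  define \<mu> where "\<mu> = Max (range v)"
  define c where "c = Max (insert 0 (\<alpha> ` {j. \<not> pure_obligee E j}))"
  have v_le: "v k \<le> \<mu>" for k unfolding \<mu>_def by simp
  have "\<mu> \<in> range v" unfolding \<mu>_def by (rule Max_in) auto
  then obtain k0 where k0: "\<mu> = v k0" by blast
  have mu0: "0 \<le> \<mu>" using nn k0 by simp
  have c0: "0 \<le> c" unfolding c_def by simp
  have c1: "c < 1" unfolding c_def using alpha_lt1 by (subst Max_less_iff) auto
  have ac: "\<alpha> j \<le> c" if "\<not> pure_obligee E j" for j unfolding c_def using that by (intro Max_ge) auto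
  have S: "(\<Sum>j\<in>UNIV. w k j * v j) \<le> \<mu>" for k
    by (rule wsum_le_bound) (auto simp: v_le mu0)
  have nonobl: "v j \<le> c * \<mu>" if "\<not> pure_obligee E j" for j
  proof -
    have "v j \<le> \<alpha> j * \<mu>" using le[of j] S[of j] alpha_01[of j] by (smt (verit) mult_left_mono)
    also have "\<dots> \<le> c * \<mu>" using ac[OF that] mu0 by (simp add: mult_right_mono)
    finally show ?thesis .
  qed
  have all: "v k \<le> c * \<mu>" for k
  proof (cases "pure_obligee E k")
    case True
    have "v k \<le> (\<Sum>j\<in>UNIV. w k j * v j)" using le[of k] \<alpha>_obl True by simp
    also have "\<dots> \<le> (\<Sum>j\<in>UNIV. w k j * (c * \<mu>))"
      by (rule sum_mono) (metis mult_left_mono nonobl w_nonneg w_nonobl mult_zero_left order_refl)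
    also have "\<dots> \<le> c * \<mu>" by (rule wsum_le_bound) (auto simp: c0 mu0)
    finally show ?thesis .
  qed (rule nonobl)
  have "\<mu> \<le> c * \<mu>" using all[of k0] k0 by simp
  then have "\<mu> \<le> 0" using c1 mu0 by (smt (verit) mult_less_cancel_right2)
  then show ?thesis using v_le[of i] nn[of i] by simp
qed


lemma mv_comp: "((A::real^'n^'n) *v x) $ k = (\<Sum>j\<in>UNIV. A $ k $ j * x $ j)"
  by (simp add: matrix_vector_mult_def)

lemma W_comp: "(W_mat w *v x) $ k = (\<Sum>j\<in>UNIV. w k j * x $ j)"
  by (simp add: mv_comp W_mat_def)

lemma proj_comp: "(unit_proj i *v x) $ k = (if k = i then x $ i else 0)"
proof -
  have "(unit_proj i *v x) $ k = (\<Sum>j\<in>UNIV. (if k = i \<and> j = i then 1 else 0) * x $ j)"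
    by (simp add: matrix_vector_mult_def unit_proj_def)
  also have "\<dots> = (\<Sum>j\<in>UNIV. (if j = i then (if k = i then x $ i else 0) else 0))"
    by (rule sum.cong) auto
  finally show ?thesis by simp
qed

lemma N_comp: "((mat 1 - diag_mat \<alpha> ** W_mat w) *v x) $ k = x $ k - \<alpha> k * (\<Sum>j\<in>UNIV. w k j * x $ j)"
proof -
  have "(diag_mat \<alpha> ** W_mat w) $ k $ j = \<alpha> k * w k j" for j
  proof -
    have "(diag_mat \<alpha> ** W_mat w) $ k $ j = (\<Sum>l\<in>UNIV. (if k = l then \<alpha> k else 0) * w l j)"
      by (simp add: matrix_matrix_mult_def diag_mat_def W_mat_def)
    also have "\<dots> = (\<Sum>l\<in>UNIV. (if k = l then \<alpha> l * w l j else 0))"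
      by (rule sum.cong) auto
    finally show ?thesis by simp
  qed
  then show ?thesis
    by (simp add: matrix_vector_mult_diff_rdistrib mv_comp sum_distrib_left mult.assoc)
qed

abbreviation "NN \<equiv> mat 1 - diag_mat \<alpha> ** W_mat w"

lemma N_inj: "NN *v x = 0 \<Longrightarrow> x = 0"
proof -
  assume h: "NN *v x = 0"
  have fx: "x $ k = \<alpha> k * (\<Sum>j\<in>UNIV. w k j * x $ j)" for k
    using arg_cong[OF h, of "\<lambda>v. v $ k"] N_comp[of x k] by simp
  have "\<bar>x $ k\<bar> = 0" for k
  proof (rule vanish[where v = "\<lambda>k. \<bar>x $ k\<bar>"])
    fix k
    have "\<bar>x $ k\<bar> = \<alpha> k * \<bar>\<Sum>j\<in>UNIV. w k j * x $ j\<bar>"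
      using fx[of k] alpha_01[of k] by (metis abs_mult abs_of_nonneg)
    also have "\<dots> \<le> \<alpha> k * (\<Sum>j\<in>UNIV. w k j * \<bar>x $ j\<bar>)"
      using alpha_01[of k] by (intro mult_left_mono) (auto intro: order.trans[OF sum_abs] simp: abs_mult w_nonneg)
    finally show "\<bar>x $ k\<bar> \<le> \<alpha> k * (\<Sum>j\<in>UNIV. w k j * \<bar>x $ j\<bar>)" .
  qed simp
  then show "x = 0" by (simp add: vec_eq_iff)
qed

lemma N_invertible: "invertible NN"
proof -
  have "\<forall>x. NN *v x = 0 \<longrightarrow> x = 0" using N_inj by blast
  then have "\<exists>B. B ** NN = mat 1" by (rule iffD2[OF matrix_left_invertible_ker])
  then obtain B where B: "B ** NN = mat 1" by (elim exE)
  then have "NN ** B = mat 1" by (subst matrix_left_right_inverse)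
  then show ?thesis unfolding invertible_def using B by (intro exI conjI)
qed

lemma N_inv: "matrix_inv NN ** NN = mat 1" "NN ** matrix_inv NN = mat 1"
proof -
  have "\<exists>A'. NN ** A' = mat 1 \<and> A' ** NN = mat 1" using N_invertible invertible_def by blast
  then have "NN ** matrix_inv NN = mat 1 \<and> matrix_inv NN ** NN = mat 1"
    unfolding matrix_inv_def by (rule someI_ex)
  then show "matrix_inv NN ** NN = mat 1" "NN ** matrix_inv NN = mat 1" by auto
qed

lemma N_pos:
  assumes "NN *v z = y" "\<And>k. 0 \<le> y $ k"
  shows "0 \<le> z $ k"
proof -
  have fz: "z $ k = y $ k + \<alpha> k * (\<Sum>j\<in>UNIV. w k j * z $ j)" for k
    using arg_cong[OF assms(1), of "\<lambda>v. v $ k"] N_comp[of z k] by simp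
  have mz: "max 0 (- z $ k) = 0" for k
  proof (rule vanish[where v = "\<lambda>k. max 0 (- z $ k)"])
    fix k
    have sm: "(\<Sum>j\<in>UNIV. w k j * (- z $ j)) \<le> (\<Sum>j\<in>UNIV. w k j * max 0 (- z $ j))"
      by (rule sum_mono, rule mult_left_mono) (auto simp: w_nonneg)
    have "- z $ k \<le> \<alpha> k * (\<Sum>j\<in>UNIV. w k j * max 0 (- z $ j))"
    proof -
      have "\<alpha> k * (- (\<Sum>j\<in>UNIV. w k j * z $ j)) \<le> \<alpha> k * (\<Sum>j\<in>UNIV. w k j * max 0 (- z $ j))"
        using alpha_01[of k] sm by (intro mult_left_mono) (auto simp: sum_negf)
      moreover have "- z $ k = - y $ k + \<alpha> k * (- (\<Sum>j\<in>UNIV. w k j * z $ j))" using fz[of k] by simp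
      ultimately show ?thesis using assms(2)[of k] by linarith
    qed
    moreover have "0 \<le> \<alpha> k * (\<Sum>j\<in>UNIV. w k j * max 0 (- z $ j))"
      using alpha_01[of k] by (simp add: wsum_nonneg)
    ultimately show "max 0 (- z $ k) \<le> \<alpha> k * (\<Sum>j\<in>UNIV. w k j * max 0 (- z $ j))" by simp
  qed simp
  moreover have "- z $ k \<le> max 0 (- z $ k)" by (rule max.cobounded2)
  ultimately show ?thesis using mz[of k] by linarith
qed

lemma Lc_ge_r: "r k \<le> Lc k"
  using Lc_ge[of 0 k] M0 by simp

lemma WL_ge: "intermediary E i \<Longrightarrow> r i \<le> (\<Sum>j\<in>UNIV. w i j * Lc j)"
proof -
  assume int: "intermediary E i"
  have "r i \<le> (\<Sum>j\<in>UNIV. w i j * r j)" using hyp int sum_delta[of i r] by metis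
  also have "\<dots> \<le> (\<Sum>j\<in>UNIV. w i j * Lc j)"
    by (rule sum_mono) (simp add: Lc_ge_r mult_left_mono w_nonneg)
  finally show ?thesis .
qed

lemma D_nonneg:
  assumes "intermediary E i"
  shows "0 \<le> matrix_inv NN ** unit_proj i *v (W_mat w *v mean_lim E w r \<alpha> - vec_of r)"
proof -
  define y where "y = unit_proj i *v (W_mat w *v mean_lim E w r \<alpha> - vec_of r)"
  have y: "0 \<le> y $ k" for k
    unfolding y_def proj_comp using WL_ge[OF assms]
    by (simp add: W_comp mean_lim_eq vec_of_def)
  have "NN *v (matrix_inv NN ** unit_proj i *v (W_mat w *v mean_lim E w r \<alpha> - vec_of r)) = y"
  proof -
    have "NN ** (matrix_inv NN ** unit_proj i) = unit_proj i"
      by (simp add: matrix_mul_assoc N_inv(2))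
    then show ?thesis unfolding y_def matrix_vector_mul_assoc by simp
  qed
  then show ?thesis unfolding less_eq_vec_def using N_pos[OF _ y] by (metis zero_index)
qed


lemma loss_eq: "expected_loss E w r \<alpha> \<beta> t = (\<Sum>i\<in>UNIV. \<beta> i * M t i)"
proof -
  let ?p = "failure_law E w r \<alpha> t"
  have "expected_loss E w r \<alpha> \<beta> t = (\<Sum>a\<in>UNIV. \<Sum>i\<in>UNIV. \<beta> i * (pmf ?p a * of_bool (a i)))"
    unfolding expected_loss_def exp_finite sum_distrib_left
    by (intro sum.cong refl) (rule mult.left_commute)
  also have "\<dots> = (\<Sum>i\<in>UNIV. \<Sum>a\<in>UNIV. \<beta> i * (pmf ?p a * of_bool (a i)))" by (rule sum.swap)
  also have "\<dots> = (\<Sum>i\<in>UNIV. \<beta> i * M t i)"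
    unfolding mean_vec_def vec_lambda_beta exp_finite sum_distrib_left ..
  finally show ?thesis .
qed

end

lemma net_upd:
  assumes "net E w r \<alpha>" "intermediary E i" "0 < b" "b < 1"
  shows "net E w r (\<alpha>(i := b))"
  using assms unfolding net_def intermediary_def by auto

lemma deriv_main:
  assumes N: "net E w r \<alpha>" and int: "intermediary E i" and a: "0 < a" "a < 1"
  shows "((\<lambda>b. mean_lim E w r (\<alpha>(i := b))) has_vector_derivative
           (matrix_inv (mat 1 - diag_mat (\<alpha>(i:=a)) ** W_mat w) ** unit_proj i
              *v (W_mat w *v mean_lim E w r (\<alpha>(i:=a)) - vec_of r))) (at a)"
proof -
  define f where "f b = mean_lim E w r (\<alpha>(i := b))" for b
  define Ninv where "Ninv = matrix_inv (mat 1 - diag_mat (\<alpha>(i:=a)) ** W_mat w)"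
  define G where "G b = Ninv ** unit_proj i *v (W_mat w *v f b - vec_of r)" for b
  define C where "C k = (\<Sum>l\<in>UNIV. \<bar>(Ninv ** unit_proj i) $ k $ l\<bar>)" for k
  interpret A: net E w r "\<alpha>(i:=a)" using net_upd[OF N int a] .
  have fixb: "f b $ k = (1 - (\<alpha>(i:=b)) k) * r k + (\<alpha>(i:=b)) k * (\<Sum>j\<in>UNIV. w k j * f b $ j)"
    if "0 < b" "b < 1" for b k
  proof -
    interpret B: net E w r "\<alpha>(i:=b)" using net_upd[OF N int that] .
    show ?thesis unfolding f_def B.mean_lim_eq vec_lambda_beta by (rule B.Lc_fix)
  qed
  have f01: "0 \<le> f b $ k \<and> f b $ k \<le> 1" if "0 < b" "b < 1" for b k
  proof -
    interpret B: net E w r "\<alpha>(i:=b)" using net_upd[OF N int that] .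
    show ?thesis unfolding f_def B.mean_lim_eq vec_lambda_beta by (rule B.Lc_01)
  qed
  have key: "(f b - f a) $ k = (b - a) * G b $ k" if b: "0 < b" "b < 1" for b k
  proof -
    define y where "y = unit_proj i *v (W_mat w *v f b - vec_of r)"
    have Nx: "(mat 1 - diag_mat (\<alpha>(i:=a)) ** W_mat w) *v (f b - f a) = (b - a) *\<^sub>R y"
    proof (subst vec_eq_iff, intro allI)
      fix l
      show "((mat 1 - diag_mat (\<alpha>(i:=a)) ** W_mat w) *v (f b - f a)) $ l = ((b - a) *\<^sub>R y) $ l"
        unfolding A.N_comp y_def
        using fixb[OF b, of l] fixb[OF a, of l]
        by (cases "l = i") (simp_all add: A.proj_comp A.W_comp vec_of_def sum_subtractf right_diff_distrib algebra_simps)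
    qed
    have "f b - f a = Ninv *v ((mat 1 - diag_mat (\<alpha>(i:=a)) ** W_mat w) *v (f b - f a))"
      unfolding Ninv_def matrix_vector_mul_assoc A.N_inv by simp
    also have "\<dots> = Ninv *v ((b - a) *\<^sub>R y)" unfolding Nx ..
    finally have "(f b - f a) $ k = (Ninv *v ((b - a) *\<^sub>R y)) $ k" by simp
    also have "\<dots> = (b - a) * (Ninv *v y) $ k"
      by (simp add: A.mv_comp sum_distrib_left mult.left_commute)
    also have "Ninv *v y = G b" unfolding G_def y_def matrix_vector_mul_assoc ..
    finally show ?thesis .
  qed
  have Gb: "\<bar>G b $ k\<bar> \<le> C k" if b: "0 < b" "b < 1" for b k
  proof -
    define y where "y = W_mat w *v f b - vec_of r"
    have y1: "\<bar>y $ l\<bar> \<le> 1" for l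
    proof -
      have "0 \<le> (\<Sum>j\<in>UNIV. w l j * f b $ j)" by (rule A.wsum_nonneg) (use f01[OF b] in auto)
      moreover have "(\<Sum>j\<in>UNIV. w l j * f b $ j) \<le> 1" by (rule A.wsum_le_bound) (use f01[OF b] in auto)
      ultimately show ?thesis unfolding y_def using A.r_01[of l] by (auto simp: A.W_comp vec_of_def abs_le_iff)
    qed
    have "\<bar>G b $ k\<bar> = \<bar>\<Sum>l\<in>UNIV. (Ninv ** unit_proj i) $ k $ l * y $ l\<bar>"
      unfolding G_def y_def A.mv_comp ..
    also have "\<dots> \<le> (\<Sum>l\<in>UNIV. \<bar>(Ninv ** unit_proj i) $ k $ l * y $ l\<bar>)" by (rule sum_abs)
    also have "\<dots> \<le> C k" unfolding C_def
      by (rule sum_mono) (simp add: abs_mult mult_left_le y1)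
    finally show ?thesis .
  qed
  have ev: "eventually (\<lambda>b. b \<in> {0<..<1} - {a}) (at a)"
    by (rule eventually_at_in_open) (use a in auto)
  have fc: "((\<lambda>b. f b $ k) \<longlongrightarrow> f a $ k) (at a)" for k
  proof -
    have "((\<lambda>b. f b $ k - f a $ k) \<longlongrightarrow> 0) (at a)"
    proof (rule Lim_null_comparison)
      show "eventually (\<lambda>b. norm (f b $ k - f a $ k) \<le> \<bar>b - a\<bar> * C k) (at a)"
        using ev
      proof (rule eventually_mono)
        fix b assume "b \<in> {0<..<1} - {a}"
        then have b: "0 < b" "b < 1" by auto
        have "norm (f b $ k - f a $ k) = \<bar>b - a\<bar> * \<bar>G b $ k\<bar>" using key[OF b, of k] by (simp add: abs_mult)
        also have "\<dots> \<le> \<bar>b - a\<bar> * C k" using Gb[OF b, of k] by (simp add: mult_left_mono)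
        finally show "norm (f b $ k - f a $ k) \<le> \<bar>b - a\<bar> * C k" .
      qed
      have "((\<lambda>b. \<bar>b - a\<bar> * C k) \<longlongrightarrow> \<bar>a - a\<bar> * C k) (at a)" by (intro tendsto_intros)
      then show "((\<lambda>b. \<bar>b - a\<bar> * C k) \<longlongrightarrow> 0) (at a)" by simp
    qed
    then show ?thesis by (rule LIM_zero_cancel)
  qed
  have Geq: "G = (\<lambda>b. \<chi> k. \<Sum>l\<in>UNIV. (Ninv ** unit_proj i) $ k $ l * ((\<Sum>j\<in>UNIV. w l j * f b $ j) - r l))"
    unfolding G_def by (rule ext) (simp add: vec_eq_iff A.mv_comp A.W_comp vec_of_def W_mat_def)
  have Gc: "(G \<longlongrightarrow> G a) (at a)"
    unfolding Geq by (intro tendsto_intros fc)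
  have lim0: "((\<lambda>y. norm (G y - G a)) \<longlongrightarrow> 0) (at a)"
    using Gc by (simp add: tendsto_norm_zero_iff LIM_zero_iff)
  have "((\<lambda>y. norm (f y - f a - (y - a) *\<^sub>R G a) / norm (y - a)) \<longlongrightarrow> 0) (at a)"
  proof (rule Lim_transform_eventually[OF lim0])
    show "eventually (\<lambda>y. norm (G y - G a) = norm (f y - f a - (y - a) *\<^sub>R G a) / norm (y - a)) (at a)"
      using ev
    proof (rule eventually_mono)
      fix y assume "y \<in> {0<..<1} - {a}"
      then have y: "0 < y" "y < 1" "y \<noteq> a" by auto
      have "f y - f a - (y - a) *\<^sub>R G a = (y - a) *\<^sub>R (G y - G a)"
        using key[OF y(1,2)] by (simp add: vec_eq_iff algebra_simps)
      then show "norm (G y - G a) = norm (f y - f a - (y - a) *\<^sub>R G a) / norm (y - a)"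
        using y(3) by simp
    qed
  qed
  then have "(f has_vector_derivative G a) (at a)"
    unfolding has_vector_derivative_def has_derivative_iff_norm
    by (simp add: bounded_linear_scaleR_left)
  then show ?thesis unfolding f_def[abs_def] G_def f_def Ninv_def .
qed


theorem mainTheorem6:
  fixes E :: "('n::finite \<times> 'n) set"
    and w :: "'n \<Rightarrow> 'n \<Rightarrow> real"
    and r \<alpha> \<beta> :: "'n \<Rightarrow> real"
  assumes incident: "\<forall>i. delta_in E i \<noteq> {} \<or> delta_out E i \<noteq> {}"
    and w_pos: "\<forall>i j. (j, i) \<in> E \<longrightarrow> w i j > 0"
    and w_zero: "\<forall>i j. (j, i) \<notin> E \<longrightarrow> w i j = 0"
    and w_sum: "\<forall>i. delta_in E i \<noteq> {} \<longrightarrow> (\<Sum>j\<in>delta_in E i. w i j) = 1"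
    and r_nonobl: "\<forall>i. \<not> pure_obligee E i \<longrightarrow> 0 < r i \<and> r i < 1"
    and r_obl: "\<forall>i. pure_obligee E i \<longrightarrow> r i = 0"
    and \<alpha>_princ: "\<forall>i. pure_principal E i \<longrightarrow> \<alpha> i = 0"
    and \<alpha>_obl: "\<forall>i. pure_obligee E i \<longrightarrow> \<alpha> i = 1"
    and \<alpha>_int: "\<forall>i. intermediary E i \<longrightarrow> 0 < \<alpha> i \<and> \<alpha> i < 1"
    and \<beta>_nonneg: "\<forall>i. \<beta> i \<ge> 0"
    and \<beta>_obl: "\<forall>i. pure_obligee E i \<longrightarrow> \<beta> i = 0"
    and hyp: "\<forall>i. intermediary E i \<longrightarrow> (\<Sum>j\<in>delta_in E i. w i j * r j) \<ge> r i"
  shows "(\<forall>t. mean_vec E w r \<alpha> t \<le> mean_vec E w r \<alpha> (Suc t)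
              \<and> expected_loss E w r \<alpha> \<beta> t \<le> expected_loss E w r \<alpha> \<beta> (Suc t))
         \<and> mean_lim E w r \<alpha> \<ge> vec_of r
         \<and> expected_loss_lim E w r \<alpha> \<beta> \<ge> expected_loss E w r \<alpha> \<beta> 0
         \<and> (\<forall>i. intermediary E i \<longrightarrow>
              (\<forall>a\<in>{0<..<1}.
                 let \<alpha>' = \<alpha>(i := a);
                     D = matrix_inv (mat 1 - diag_mat \<alpha>' ** W_mat w) ** unit_proj i
                           *v (W_mat w *v mean_lim E w r \<alpha>' - vec_of r)
                 in ((\<lambda>b. mean_lim E w r (\<alpha>(i := b))) has_vector_derivative D) (at a)
                    \<and> D \<ge> 0))"
proof -
  have N: "net E w r \<alpha>" unfolding net_def using assms by blast
  interpret net E w r \<alpha> by (rule N)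
  have mono: "mean_vec E w r \<alpha> t \<le> mean_vec E w r \<alpha> (Suc t)" for t
    unfolding less_eq_vec_def using M_mono by blast
  have lmono: "expected_loss E w r \<alpha> \<beta> t \<le> expected_loss E w r \<alpha> \<beta> (Suc t)" for t
    unfolding loss_eq by (rule sum_mono) (simp add: M_mono \<beta>_nonneg mult_left_mono)
  have ge: "mean_lim E w r \<alpha> \<ge> vec_of r"
    unfolding less_eq_vec_def mean_lim_eq vec_of_def using Lc_ge_r by simp
  have "(\<lambda>t. expected_loss E w r \<alpha> \<beta> t) \<longlonglongrightarrow> (\<Sum>i\<in>UNIV. \<beta> i * Lc i)"
    unfolding loss_eq by (intro tendsto_intros M_Lc)
  then have "expected_loss_lim E w r \<alpha> \<beta> = (\<Sum>i\<in>UNIV. \<beta> i * Lc i)"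
    unfolding expected_loss_lim_def by (rule limI)
  then have lge: "expected_loss_lim E w r \<alpha> \<beta> \<ge> expected_loss E w r \<alpha> \<beta> 0"
    unfolding loss_eq by (simp add: sum_mono Lc_ge \<beta>_nonneg mult_left_mono)
  have der: "\<forall>i. intermediary E i \<longrightarrow>
              (\<forall>a\<in>{0<..<1}.
                 let \<alpha>' = \<alpha>(i := a);
                     D = matrix_inv (mat 1 - diag_mat \<alpha>' ** W_mat w) ** unit_proj i
                           *v (W_mat w *v mean_lim E w r \<alpha>' - vec_of r)
                 in ((\<lambda>b. mean_lim E w r (\<alpha>(i := b))) has_vector_derivative D) (at a)
                    \<and> D \<ge> 0)"
  proof (intro allI impI ballI)
    fix i a assume int: "intermediary E i" and a: "a \<in> {0<..<1::real}"
    then have a01: "0 < a" "a < 1" by auto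
    interpret B: net E w r "\<alpha>(i:=a)" using net_upd[OF N int a01] .
    show "let \<alpha>' = \<alpha>(i := a);
                     D = matrix_inv (mat 1 - diag_mat \<alpha>' ** W_mat w) ** unit_proj i
                           *v (W_mat w *v mean_lim E w r \<alpha>' - vec_of r)
                 in ((\<lambda>b. mean_lim E w r (\<alpha>(i := b))) has_vector_derivative D) (at a)
                    \<and> D \<ge> 0"
      unfolding Let_def using deriv_main[OF N int a01] B.D_nonneg[OF int] by blast
  qed
  show ?thesis using mono lmono ge lge der by blast
qed

end
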